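(* Let $d\ge 1$ and let $\mathcal{F}$ be a class of real-valued integrable functions on $[0,1]^d$; for $f\in\mathcal{F}$ write $\mu(f)=\int_{[0,1]^d} f(\boldsymbol{x})\,\mathrm{d}\boldsymbol{x}$. Let $\alpha>1$ and $0<m\le M<\infty$. Suppose that $\mathcal{F}$ has a superlinear worst case lower bound, namely for every $n\ge 1$ and every choice of points $\boldsymbol{x}_1,\dots,\boldsymbol{x}_n\in[0,1]^d$, $$\sup_{f\in\mathcal{F}}\biggl|\frac1n\sum_{i=1}^n f(\boldsymbol{x}_i)-\mu(f)\biggr|> m n^{-\alpha}.$$ Suppose further that there is an infinite sequence of points $\boldsymbol{x}_1,\boldsymbol{x}_2,\dots\in[0,1]^d$ and a strictly increasing sequence of positive integers $n_1<n_2<\cdots$ such that $$\sup_{f\in\mathcal{F}}\biggl|\frac1n\sum_{i=1}^n f(\boldsymbol{x}_i)-\mu(f)\biggr|\le M n^{-\alpha}\quad\text{for all } n\in\{n_1,n_2,\dots\}.$$ Then for every $k\ge1$, the ratio $\rho=\rho_k=n_{k+1}/n_k$ satisfies $$\rho \ge 1 + \biggl[\frac{m}{M}\bigl(1+\rho^{1-\alpha}\bigr)^{-1}\biggr]^{1/(\alpha-1)} > 1 + \Bigl(\frac{m}{2M}\Bigr)^{1/(\alpha-1)}.$$ *)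

theory Defs
  imports "HOL-Analysis.Analysis"
begin

text \<open>The unit cube [0,1]^d, with d = CARD('d) (a finite index type).\<close>
definition unit_cube :: "(real ^ 'd) set" where
  "unit_cube = {x. \<forall>i. 0 \<le> x $ i \<and> x $ i \<le> 1}"

definition mu :: "(real ^ 'd \<Rightarrow> real) \<Rightarrow> real" where
  "mu f = integral unit_cube f"

definition wc_err :: "(real ^ 'd \<Rightarrow> real) set \<Rightarrow> (nat \<Rightarrow> real ^ 'd) \<Rightarrow> nat \<Rightarrow> ereal" where
  "wc_err F p n = (SUP f\<in>F. ereal \<bar>(\<Sum>i<n. f (p i)) / real n - mu f\<bar>)"

end

theory Submission imports Defs begin
lemma alg:
  fixes \<alpha> m M N N' r :: real
  assumes a: "\<alpha> > 1" and mM: "0 < m" "m \<le> M" and N: "0 < N" "N < N'" and r: "r = N' - N"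
    and h: "m * r powr (-\<alpha>) < (M * N powr (1-\<alpha>) + M * N' powr (1-\<alpha>)) / r"
  shows "N'/N > 1 + ((m / M) * inverse (1 + (N'/N) powr (1 - \<alpha>))) powr (1 / (\<alpha> - 1))"
proof -
  define \<rho> where "\<rho> = N'/N"
  define t where "t = r / N"
  have rp: "r > 0" using N r by simp
  have tp: "t > 0" using rp N by (simp add: t_def)
  have rho: "\<rho> = 1 + t" using N r by (simp add: \<rho>_def t_def field_simps)
  have Mp: "M > 0" using mM by simp
  have "m * r powr (-\<alpha>) * r < M * N powr (1-\<alpha>) + M * N' powr (1-\<alpha>)"
    using h rp by (simp add: field_simps)
  moreover have "r powr (-\<alpha>) * r = r powr (1-\<alpha>)" using powr_mult_base[of r "-\<alpha>"] rp by (simp add: mult.commute)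
  ultimately have h1: "m * r powr (1-\<alpha>) < M * N powr (1-\<alpha>) + M * N' powr (1-\<alpha>)"
    by (simp add: mult.assoc)
  have e1: "N' powr (1-\<alpha>) = \<rho> powr (1-\<alpha>) * N powr (1-\<alpha>)"
    using N by (simp add: \<rho>_def powr_divide)
  have e2: "r powr (1-\<alpha>) = t powr (1-\<alpha>) * N powr (1-\<alpha>)"
    using N rp by (simp add: t_def powr_divide)
  have Np: "N powr (1-\<alpha>) > 0" using N by simp
  have "(m * t powr (1-\<alpha>)) * N powr (1-\<alpha>) < (M * (1 + \<rho> powr (1-\<alpha>))) * N powr (1-\<alpha>)"
    using h1 unfolding e1 e2 by (simp add: algebra_simps)
  hence h2: "m * t powr (1-\<alpha>) < M * (1 + \<rho> powr (1-\<alpha>))"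
    using Np by simp
  have e3: "t powr (1-\<alpha>) = inverse (t powr (\<alpha>-1))"
    using powr_minus[of t "\<alpha>-1"] by simp
  have tpa: "t powr (\<alpha>-1) > 0" using tp by simp
  have q: "1 + \<rho> powr (1-\<alpha>) > 0" by (smt (verit) powr_ge_zero)
  have "m < M * (1 + \<rho> powr (1-\<alpha>)) * t powr (\<alpha>-1)"
    using h2 tpa unfolding e3 by (simp add: field_simps)
  hence c0: "m / (M * (1 + \<rho> powr (1-\<alpha>))) < t powr (\<alpha>-1)"
    using Mp q by (simp add: pos_divide_less_eq mult.commute mult.left_commute)
  have c: "(m / M) * inverse (1 + \<rho> powr (1-\<alpha>)) < t powr (\<alpha>-1)"
    using c0 by (simp add: divide_inverse mult.assoc)
  have "((m / M) * inverse (1 + \<rho> powr (1-\<alpha>))) powr (1/(\<alpha>-1)) < (t powr (\<alpha>-1)) powr (1/(\<alpha>-1))"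
    apply (rule powr_less_mono2) using a c mM q by auto
  also have "\<dots> = t" using a tp by (simp add: powr_powr)
  finally show ?thesis using rho \<rho>_def by simp
qed

lemma alg2:
  fixes \<alpha> m M \<rho> :: real
  assumes a: "\<alpha> > 1" and mM: "0 < m" "m \<le> M" and r: "\<rho> > 1"
  shows "1 + ((m / M) * inverse (1 + \<rho> powr (1 - \<alpha>))) powr (1 / (\<alpha> - 1))
             > 1 + (m / (2 * M)) powr (1 / (\<alpha> - 1))"
proof -
  have "\<rho> powr (1-\<alpha>) < \<rho> powr 0" apply (rule powr_less_mono) using a r by auto
  hence l: "\<rho> powr (1-\<alpha>) < 1" using r by simp
  have q: "1 + \<rho> powr (1-\<alpha>) > 0" by (smt (verit) powr_ge_zero)
  have "m / (2 * M) < (m / M) * inverse (1 + \<rho> powr (1 - \<alpha>))"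
  proof -
    have "m / (2 * M) = (m/M) * inverse 2" by simp
    also have "\<dots> < (m/M) * inverse (1 + \<rho> powr (1 - \<alpha>))"
      apply (rule mult_strict_left_mono) using l q mM less_imp_inverse_less[of "1 + \<rho> powr (1 - \<alpha>)" 2] by simp_all
    finally show ?thesis .
  qed
  hence "(m / (2 * M)) powr (1 / (\<alpha> - 1)) < ((m / M) * inverse (1 + \<rho> powr (1 - \<alpha>))) powr (1 / (\<alpha> - 1))"
    apply - apply (rule powr_less_mono2) using a mM by auto
  thus ?thesis by simp
qed

lemma sum_split: fixes N r :: nat and g :: "nat \<Rightarrow> real" shows "(\<Sum>i<N+r. g i) = (\<Sum>i<N. g i) + (\<Sum>i<r. g (N+i))"
  by (induct r) (auto simp: add.assoc)

lemma err:
  fixes a b \<mu> :: real and N N' r :: nat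
  assumes "0 < N" "N < N'" "r = N' - N"
  shows "\<bar>b / r - \<mu>\<bar> \<le> (N' * \<bar>(a+b)/N' - \<mu>\<bar> + N * \<bar>a/N - \<mu>\<bar>) / r"
proof -
  have rp: "real r > 0" "real r = real N' - real N" using assms by auto
  have "b / r - \<mu> = (N' * ((a+b)/N' - \<mu>) - N * (a/N - \<mu>)) / r"
    using assms rp by (simp add: field_simps)
  also have "\<bar>\<dots>\<bar> \<le> (N' * \<bar>(a+b)/N' - \<mu>\<bar> + N * \<bar>a/N - \<mu>\<bar>) / r"
  proof -
    have "\<bar>N' * ((a+b)/N' - \<mu>) - N * (a/N - \<mu>)\<bar> \<le> N' * \<bar>(a+b)/N' - \<mu>\<bar> + N * \<bar>a/N - \<mu>\<bar>"
      using abs_triangle_ineq4[of "N' * ((a+b)/N' - \<mu>)" "N * (a/N - \<mu>)"] by (simp add: abs_mult)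
    thus ?thesis using rp by (simp add: divide_right_mono del: of_nat_diff)
  qed
  finally show ?thesis .
qed
theorem theorem1:
  fixes F :: "(real ^ 'd \<Rightarrow> real) set"
    and \<alpha> m M :: real
    and x :: "nat \<Rightarrow> real ^ 'd"
    and n :: "nat \<Rightarrow> nat"
  assumes integrable: "\<And>f. f \<in> F \<Longrightarrow> f integrable_on unit_cube"
    and alpha: "\<alpha> > 1"
    and mM: "0 < m" "m \<le> M"
    and lower: "\<And>N p. N \<ge> 1 \<Longrightarrow> (\<forall>i<N. p i \<in> unit_cube) \<Longrightarrow>
                  wc_err F p N > ereal (m * real N powr (-\<alpha>))"
    and pts: "\<And>i. x i \<in> unit_cube"
    and n_mono: "strict_mono n"
    and n_pos: "n 0 \<ge> 1"
    and upper: "\<And>k. wc_err F x (n k) \<le> ereal (M * real (n k) powr (-\<alpha>))"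
  shows "\<forall>k. let \<rho> = real (n (Suc k)) / real (n k) in
           \<rho> \<ge> 1 + ((m / M) * inverse (1 + \<rho> powr (1 - \<alpha>))) powr (1 / (\<alpha> - 1))
         \<and> 1 + ((m / M) * inverse (1 + \<rho> powr (1 - \<alpha>))) powr (1 / (\<alpha> - 1))
             > 1 + (m / (2 * M)) powr (1 / (\<alpha> - 1))"
proof (intro allI)
  fix k
  define N where "N = n k"
  define N' where "N' = n (Suc k)"
  define r where "r = N' - N"
  define p where "p = (\<lambda>i. x (N + i))"
  have N0: "N \<ge> 1" using n_pos strict_mono_mono[OF n_mono] unfolding N_def
    by (meson le_trans monoD zero_le)
  have NN: "N < N'" using n_mono unfolding N_def N'_def strict_mono_def by simp
  have r1: "r \<ge> 1" using NN r_def by simp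
  have Nr: "N' = N + r" using NN r_def by simp
  define B where "B = (M * real N powr (1-\<alpha>) + M * real N' powr (1-\<alpha>)) / real r"
  have bnd: "\<And>f. f \<in> F \<Longrightarrow> \<bar>(\<Sum>i<r. f (p i)) / real r - mu f\<bar> \<le> B"
  proof -
    fix f assume f: "f \<in> F"
    have uN: "\<bar>(\<Sum>i<N. f (x i)) / real N - mu f\<bar> \<le> M * real N powr (-\<alpha>)"
    proof -
      have "ereal \<bar>(\<Sum>i<N. f (x i)) / real N - mu f\<bar> \<le> wc_err F x N"
        unfolding wc_err_def using f by (rule SUP_upper)
      also have "\<dots> \<le> ereal (M * real N powr (-\<alpha>))" using upper[of k] N_def by simp
      finally show ?thesis by simp
    qed
    have uN': "\<bar>(\<Sum>i<N'. f (x i)) / real N' - mu f\<bar> \<le> M * real N' powr (-\<alpha>)"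
    proof -
      have "ereal \<bar>(\<Sum>i<N'. f (x i)) / real N' - mu f\<bar> \<le> wc_err F x N'"
        unfolding wc_err_def using f by (rule SUP_upper)
      also have "\<dots> \<le> ereal (M * real N' powr (-\<alpha>))" using upper[of "Suc k"] N'_def by simp
      finally show ?thesis by simp
    qed
    have sp: "(\<Sum>i<N'. f (x i)) = (\<Sum>i<N. f (x i)) + (\<Sum>i<r. f (p i))"
      unfolding Nr p_def by (rule sum_split)
    have "\<bar>(\<Sum>i<r. f (p i)) / real r - mu f\<bar> \<le> (real N' * \<bar>(\<Sum>i<N'. f (x i)) / real N' - mu f\<bar> + real N * \<bar>(\<Sum>i<N. f (x i)) / real N - mu f\<bar>) / real r"
      unfolding sp using err[of N N' r] N0 NN r_def by simp
    also have "\<dots> \<le> (real N' * (M * real N' powr (-\<alpha>)) + real N * (M * real N powr (-\<alpha>))) / real r"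
      apply (rule divide_right_mono) apply (rule add_mono)
      using uN uN' by (auto intro: mult_left_mono)
    also have "\<dots> = B"
    proof -
      have "real N * real N powr (-\<alpha>) = real N powr (1-\<alpha>)" using powr_mult_base[of "real N" "-\<alpha>"] N0 by simp
      moreover have "real N' * real N' powr (-\<alpha>) = real N' powr (1-\<alpha>)" using powr_mult_base[of "real N'" "-\<alpha>"] by simp
      ultimately show ?thesis unfolding B_def by (simp add: algebra_simps)
    qed
    finally show "\<bar>(\<Sum>i<r. f (p i)) / real r - mu f\<bar> \<le> B" .
  qed
  have "wc_err F p r \<le> ereal B" unfolding wc_err_def
    by (rule SUP_least) (use bnd in simp)
  moreover have "wc_err F p r > ereal (m * real r powr (-\<alpha>))"
    apply (rule lower[OF r1]) using pts p_def by simp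
  ultimately have "ereal (m * real r powr (-\<alpha>)) < ereal B" by (rule order.strict_trans2[rotated])
  hence h: "m * real r powr (-\<alpha>) < B" by simp
  have main: "real N' / real N > 1 + ((m / M) * inverse (1 + (real N' / real N) powr (1 - \<alpha>))) powr (1 / (\<alpha> - 1))"
    apply (rule alg[OF alpha mM, of "real N" "real N'" "real r"])
    using N0 NN r_def h B_def by auto
  have rho1: "real N' / real N > 1" using N0 NN by simp
  show "let \<rho> = real (n (Suc k)) / real (n k) in
           \<rho> \<ge> 1 + ((m / M) * inverse (1 + \<rho> powr (1 - \<alpha>))) powr (1 / (\<alpha> - 1))
         \<and> 1 + ((m / M) * inverse (1 + \<rho> powr (1 - \<alpha>))) powr (1 / (\<alpha> - 1))
             > 1 + (m / (2 * M)) powr (1 / (\<alpha> - 1))"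
    using main alg2[OF alpha mM rho1] unfolding N_def N'_def Let_def by simp
qed

end
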